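(* Let $G=(V,E)$ be a finite simple graph and let $x,y$ be easy construction sequences for $G$ whose restrictions to $V$ coincide (the vertices appear in the same order in $x$ and in $y$). Then $\nu(x)=\nu(y)$.
   Context: For a finite simple graph $G=(V,E)$ with $\ell=|V|+|E|$, a construction sequence (c-sequence) is a bijection $x:\{1,\dots,\ell\}\to V\sqcup E$ such that every edge $e=uw$ satisfies $x^{-1}(e)>\max\{x^{-1}(u),x^{-1}(w)\}$. The cost of $x$ is $\nu(x)=\sum_{e=uw\in E}\big(2x^{-1}(e)-x^{-1}(u)-x^{-1}(w)\big)$. A c-sequence is easy if no edge precedes a vertex. *)

theory Defs
  imports Main
begin

definition simple_graph :: "'a set \<Rightarrow> 'a set set \<Rightarrow> bool" where
  "simple_graph V E \<longleftrightarrow> finite V \<and> (\<forall>e\<in>E. e \<subseteq> V \<and> card e = 2)"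

definition elems :: "'a set \<Rightarrow> 'a set set \<Rightarrow> ('a + 'a set) set" where
  "elems V E = V <+> E"

definition pos :: "'a set \<Rightarrow> 'a set set \<Rightarrow> (nat \<Rightarrow> 'a + 'a set) \<Rightarrow> ('a + 'a set) \<Rightarrow> nat" where
  "pos V E x a = inv_into {1..card V + card E} x a"

definition c_sequence :: "'a set \<Rightarrow> 'a set set \<Rightarrow> (nat \<Rightarrow> 'a + 'a set) \<Rightarrow> bool" where
  "c_sequence V E x \<longleftrightarrow>
     bij_betw x {1..card V + card E} (elems V E) \<and>
     (\<forall>e\<in>E. \<forall>u\<in>e. pos V E x (Inr e) > pos V E x (Inl u))"

definition easy :: "'a set \<Rightarrow> 'a set set \<Rightarrow> (nat \<Rightarrow> 'a + 'a set) \<Rightarrow> bool" where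
  "easy V E x \<longleftrightarrow> c_sequence V E x \<and>
     (\<forall>e\<in>E. \<forall>v\<in>V. pos V E x (Inl v) < pos V E x (Inr e))"

definition cost :: "'a set \<Rightarrow> 'a set set \<Rightarrow> (nat \<Rightarrow> 'a + 'a set) \<Rightarrow> int" where
  "cost V E x = (\<Sum>e\<in>E. 2 * int (pos V E x (Inr e)) - (\<Sum>u\<in>e. int (pos V E x (Inl u))))"

end

theory Submission
  imports Defs
begin

lemma fin_E:
  assumes "simple_graph V E" shows "finite E"
proof -
  have "E \<subseteq> Pow V" using assms unfolding simple_graph_def by auto
  thus ?thesis using assms unfolding simple_graph_def by (meson finite_Pow_iff finite_subset)
qed

lemma pos_basic:
  assumes "c_sequence V E x"
  shows "inj_on (pos V E x) (elems V E)"
    and "\<And>a. a \<in> elems V E \<Longrightarrow> pos V E x a \<in> {1..card V + card E}"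
    and "pos V E x ` elems V E = {1..card V + card E}"
proof -
  have b: "bij_betw x {1..card V + card E} (elems V E)" using assms c_sequence_def by blast
  then have s: "x ` {1..card V + card E} = elems V E" by (simp add: bij_betw_def)
  show "inj_on (pos V E x) (elems V E)" unfolding pos_def using s
    by (simp add: inj_on_inv_into)
  show "\<And>a. a \<in> elems V E \<Longrightarrow> pos V E x a \<in> {1..card V + card E}"
    unfolding pos_def using s by (metis inv_into_into)
  show "pos V E x ` elems V E = {1..card V + card E}"
    unfolding pos_def using bij_betw_imp_surj_on[OF bij_betw_inv_into[OF b]] by simp
qed

lemma easy_struct:
  assumes g: "simple_graph V E" and ez: "easy V E x"
  shows "pos V E x ` (Inl ` V) = {1..card V}"
    and "pos V E x ` (Inr ` E) = {card V + 1..card V + card E}"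
proof -
  have c: "c_sequence V E x" using ez easy_def by blast
  note pb = pos_basic[OF c]
  have fV: "finite V" using g simple_graph_def by blast
  have fE: "finite E" using fin_E[OF g] .
  define P where "P = pos V E x ` (Inl ` V)"
  define Q where "Q = pos V E x ` (Inr ` E)"
  have el: "elems V E = Inl ` V \<union> Inr ` E" unfolding elems_def by auto
  have PQ: "P \<union> Q = {1..card V + card E}" using pb(3) el P_def Q_def by (simp add: image_Un)
  have lt: "\<And>p q. p \<in> P \<Longrightarrow> q \<in> Q \<Longrightarrow> p < q" using ez unfolding easy_def P_def Q_def by auto
  have injV: "inj_on (pos V E x) (Inl ` V)" using pb(1) el by (auto intro: inj_on_subset)
  have cP: "card P = card V" unfolding P_def
    using card_image[OF injV] card_image[of Inl V] by (simp add: inj_on_def)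
  have sub: "P \<subseteq> {1..card V}"
  proof
    fix p assume pP: "p \<in> P"
    show "p \<in> {1..card V}"
    proof (rule ccontr)
      assume "p \<notin> {1..card V}"
      moreover have "p \<in> {1..card V + card E}" using pP PQ by auto
      ultimately have pg: "p > card V" by auto
      have "{1..p} \<subseteq> P"
      proof
        fix k assume k: "k \<in> {1..p}"
        then have "k \<in> {1..card V + card E}" using \<open>p \<in> {1..card V + card E}\<close> by auto
        then have "k \<in> P \<or> k \<in> Q" using PQ by auto
        thus "k \<in> P" using lt[OF pP] k by force
      qed
      moreover have "finite P" using fV P_def by simp
      ultimately have "card {1..p} \<le> card P" by (rule card_mono[rotated])
      thus False using cP pg by simp
    qed
  qed
  have fin: "finite {1..card V}" by simp
  have Peq: "P = {1..card V}"
    using card_subset_eq[OF fin sub] cP by simp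
  show "pos V E x ` (Inl ` V) = {1..card V}" using Peq unfolding P_def .
  have disj: "P \<inter> Q = {}" using lt by (meson disjoint_iff less_irrefl)
  have "Q = {1..card V + card E} - P" using PQ disj by blast
  also have "\<dots> = {card V + 1..card V + card E}" using Peq by auto
  finally have "Q = {card V + 1..card V + card E}" .
  then show "pos V E x ` (Inr ` E) = {card V + 1..card V + card E}" unfolding Q_def .
qed

lemma edge_sum:
  assumes g: "simple_graph V E" and ez: "easy V E x"
  shows "(\<Sum>e\<in>E. int (pos V E x (Inr e))) = (\<Sum>k\<in>{card V + 1..card V + card E}. int k)"
proof -
  have c: "c_sequence V E x" using ez easy_def by blast
  have el: "elems V E = Inl ` V \<union> Inr ` E" unfolding elems_def by auto
  have inj: "inj_on (\<lambda>e. pos V E x (Inr e)) E"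
    using pos_basic(1)[OF c] el by (auto simp: inj_on_def)
  have "(\<Sum>k\<in>(\<lambda>e. pos V E x (Inr e)) ` E. int k) = (\<Sum>e\<in>E. int (pos V E x (Inr e)))"
    using sum.reindex[OF inj] by simp
  moreover have "(\<lambda>e. pos V E x (Inr e)) ` E = {card V + 1..card V + card E}"
    using easy_struct(2)[OF g ez] by (simp add: image_image)
  ultimately show ?thesis by simp
qed

lemma vertex_rank:
  assumes g: "simple_graph V E" and ez: "easy V E x" and v: "v \<in> V"
  shows "pos V E x (Inl v) = card {w\<in>V. pos V E x (Inl w) < pos V E x (Inl v)} + 1"
proof -
  have c: "c_sequence V E x" using ez easy_def by blast
  have el: "elems V E = Inl ` V \<union> Inr ` E" unfolding elems_def by auto
  define f where "f = (\<lambda>w. pos V E x (Inl w))"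
  have inj: "inj_on f V"
    using pos_basic(1)[OF c] el unfolding f_def by (auto simp: inj_on_def)
  have im: "f ` V = {1..card V}" using easy_struct(1)[OF g ez] unfolding f_def by (simp add: image_image)
  have fv: "f v \<in> {1..card V}" using im v by blast
  have "f ` {w\<in>V. f w < f v} = {1..<f v}"
  proof
    show "f ` {w\<in>V. f w < f v} \<subseteq> {1..<f v}" using im by auto
    show "{1..<f v} \<subseteq> f ` {w\<in>V. f w < f v}"
    proof
      fix k assume k: "k \<in> {1..<f v}"
      then have "k \<in> f ` V" using im fv by auto
      then obtain w where "w \<in> V" "k = f w" by blast
      thus "k \<in> f ` {w\<in>V. f w < f v}" using k by auto
    qed
  qed
  moreover have "card (f ` {w\<in>V. f w < f v}) = card {w\<in>V. f w < f v}"
    by (rule card_image) (rule inj_on_subset[OF inj], auto)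
  ultimately have "card {w\<in>V. f w < f v} = f v - 1" by simp
  thus ?thesis using fv unfolding f_def by simp
qed

theorem lemma4:
  fixes V :: "'a set" and E :: "'a set set" and x y :: "nat \<Rightarrow> 'a + 'a set"
  assumes "simple_graph V E"
    and "easy V E x" and "easy V E y"
    and "\<forall>u\<in>V. \<forall>w\<in>V. pos V E x (Inl u) < pos V E x (Inl w) \<longleftrightarrow> pos V E y (Inl u) < pos V E y (Inl w)"
  shows "cost V E x = cost V E y"
proof -
  have vp: "pos V E x (Inl v) = pos V E y (Inl v)" if v: "v \<in> V" for v
  proof -
    have "{w\<in>V. pos V E x (Inl w) < pos V E x (Inl v)} = {w\<in>V. pos V E y (Inl w) < pos V E y (Inl v)}"
    proof (rule Collect_cong)
      fix w show "(w \<in> V \<and> pos V E x (Inl w) < pos V E x (Inl v)) = (w \<in> V \<and> pos V E y (Inl w) < pos V E y (Inl v))"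
        using assms(4) v by blast
    qed
    thus ?thesis using vertex_rank[OF assms(1) assms(2) v] vertex_rank[OF assms(1) assms(3) v] by simp
  qed
  have sub: "\<And>e. e \<in> E \<Longrightarrow> e \<subseteq> V" using assms(1) unfolding simple_graph_def by blast
  have inner: "(\<Sum>u\<in>e. int (pos V E x (Inl u))) = (\<Sum>u\<in>e. int (pos V E y (Inl u)))" if "e \<in> E" for e
    using sub[OF that] vp by (intro sum.cong refl) (simp add: subset_iff)
  have cx: "cost V E x = (\<Sum>e\<in>E. 2 * int (pos V E x (Inr e))) - (\<Sum>e\<in>E. \<Sum>u\<in>e. int (pos V E x (Inl u)))"
    unfolding cost_def by (rule sum_subtractf)
  have cy: "cost V E y = (\<Sum>e\<in>E. 2 * int (pos V E y (Inr e))) - (\<Sum>e\<in>E. \<Sum>u\<in>e. int (pos V E y (Inl u)))"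
    unfolding cost_def by (rule sum_subtractf)
  have e1: "(\<Sum>e\<in>E. 2 * int (pos V E x (Inr e))) = (\<Sum>e\<in>E. 2 * int (pos V E y (Inr e)))"
    using edge_sum[OF assms(1) assms(2)] edge_sum[OF assms(1) assms(3)]
    by (simp only: sum_distrib_left[symmetric])
  have e2: "(\<Sum>e\<in>E. \<Sum>u\<in>e. int (pos V E x (Inl u))) = (\<Sum>e\<in>E. \<Sum>u\<in>e. int (pos V E y (Inl u)))"
    using inner by (rule sum.cong[OF refl])
  show ?thesis using cx cy e1 e2 by simp
qed

end
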